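(* Let $r,p\ge0$ be integers and $a_{-r},\dots,a_p$ real coefficients whose symbol $\gamma(\xi)=\sum_{k=-r}^{p}a_ke^{ik\xi}$ satisfies $|\gamma(\xi)|\le1$ for all $\xi\in\mathbb R$, and such that $\sum_{k=-r}^pa_k=1$ and $\sum_{k=-r}^p k a_k=-\lambda$ for some $\lambda>0$. Then $|a_0|<1$. *)

theory Defs
  imports "HOL-Analysis.Analysis"
begin

definition symbol :: "nat \<Rightarrow> nat \<Rightarrow> (int \<Rightarrow> real) \<Rightarrow> real \<Rightarrow> complex" where
  "symbol r p a \<xi> = (\<Sum>k = - int r..int p. complex_of_real (a k) * exp (\<i> * complex_of_real (real_of_int k * \<xi>)))"

end

theory Submission imports Defs begin
lemma root_sum:
  fixes m :: int and N :: nat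
  assumes m0: "m \<noteq> 0" and mN: "\<bar>m\<bar> < int N"
  shows "(\<Sum>j<N. exp (\<i> * complex_of_real (real_of_int m * (2*pi*real j / real N)))) = 0"
proof -
  have N0: "N > 0" using mN by simp
  define z where "z = exp (\<i> * complex_of_real (real_of_int m * 2*pi / real N))"
  have t: "exp (\<i> * complex_of_real (real_of_int m * (2*pi*real j / real N))) = z ^ j" for j
  proof -
    have "\<i> * complex_of_real (real_of_int m * (2*pi*real j / real N)) = of_nat j * (\<i> * complex_of_real (real_of_int m * 2*pi / real N))"
      by (simp add: field_simps)
    then show ?thesis unfolding z_def by (simp only: exp_of_nat_mult)
  qed
  have zN: "z ^ N = 1"
  proof -
    have "z ^ N = exp (of_nat N * (\<i> * complex_of_real (real_of_int m * 2*pi / real N)))"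
      unfolding z_def by (simp only: exp_of_nat_mult)
    also have "of_nat N * (\<i> * complex_of_real (real_of_int m * 2*pi / real N)) = \<i> * (of_int m * (of_real pi * 2))"
      using N0 by (simp add: field_simps)
    finally show ?thesis by simp
  qed
  have z1: "z \<noteq> 1"
  proof
    assume "z = 1"
    then obtain n :: int where n: "real_of_int m * 2*pi / real N = of_int (2*n) * pi"
      unfolding z_def exp_eq_1 by auto
    then have "real_of_int m = real_of_int n * real N" using N0 by (simp add: field_simps)
    then have "m = n * int N" by (metis of_int_eq_iff of_int_mult of_int_of_nat_eq)
    moreover have "n \<noteq> 0" using \<open>m = n * int N\<close> m0 by auto
    ultimately have "\<bar>m\<bar> = \<bar>n\<bar> * int N" by (simp add: abs_mult)
    moreover have "\<bar>n\<bar> \<ge> 1" using \<open>n \<noteq> 0\<close> by simp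
    ultimately have "\<bar>m\<bar> \<ge> int N" using mult_right_mono[of 1 "\<bar>n\<bar>" "int N"] by simp
    then show False using mN by simp
  qed
  show ?thesis unfolding t using geometric_sum[OF z1, of N] zN by simp
qed
lemma sq_expand:
  "complex_of_real ((cmod (symbol r p a \<xi>))^2) =
   (\<Sum>k = - int r..int p. \<Sum>l = - int r..int p. complex_of_real (a k * a l) * exp (\<i> * complex_of_real (real_of_int (k - l) * \<xi>)))"
proof -
  have c: "cnj (symbol r p a \<xi>) = (\<Sum>l = - int r..int p. complex_of_real (a l) * exp (- (\<i> * complex_of_real (real_of_int l * \<xi>))))"
    unfolding symbol_def by (simp add: exp_cnj)
  have "complex_of_real ((cmod (symbol r p a \<xi>))^2) = symbol r p a \<xi> * cnj (symbol r p a \<xi>)"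
    by (rule complex_norm_square)
  also have "\<dots> = (\<Sum>k = - int r..int p. \<Sum>l = - int r..int p. (complex_of_real (a k) * exp (\<i> * complex_of_real (real_of_int k * \<xi>))) * (complex_of_real (a l) * exp (- (\<i> * complex_of_real (real_of_int l * \<xi>)))))"
    unfolding c by (simp add: symbol_def sum_product)
  also have "\<dots> = (\<Sum>k = - int r..int p. \<Sum>l = - int r..int p. complex_of_real (a k * a l) * exp (\<i> * complex_of_real (real_of_int (k - l) * \<xi>)))"
  proof (intro sum.cong refl)
    fix k l :: int
    have "exp (\<i> * complex_of_real (real_of_int k * \<xi>)) * exp (- (\<i> * complex_of_real (real_of_int l * \<xi>)))
       = exp (\<i> * complex_of_real (real_of_int (k - l) * \<xi>))"
      by (simp add: exp_add[symmetric] algebra_simps)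
    then show "complex_of_real (a k) * exp (\<i> * complex_of_real (real_of_int k * \<xi>)) * (complex_of_real (a l) * exp (- (\<i> * complex_of_real (real_of_int l * \<xi>)))) =
      complex_of_real (a k * a l) * exp (\<i> * complex_of_real (real_of_int (k - l) * \<xi>))"
      by (metis (no_types, lifting) mult.assoc mult.left_commute of_real_mult)
  qed
  finally show ?thesis .
qed

lemma parseval_bound:
  assumes stab: "\<And>\<xi>::real. cmod (symbol r p a \<xi>) \<le> 1"
  shows "(\<Sum>k = - int r..int p. (a k)^2) \<le> 1"
proof -
  define N where "N = r + p + 1"
  define K where "K = {- int r..int p}"
  have N0: "real N > 0" unfolding N_def by simp
  have inner: "(\<Sum>j<N. exp (\<i> * complex_of_real (real_of_int (k - l) * (2*pi*real j / real N))))
      = (if k = l then of_nat N else 0)" if "k \<in> K" "l \<in> K" for k l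
  proof (cases "k = l")
    case True then show ?thesis by simp
  next
    case False
    have "\<bar>k - l\<bar> < int N" using that unfolding K_def N_def by auto
    then show ?thesis using root_sum[of "k - l" N] False by simp
  qed
  have "complex_of_real (\<Sum>j<N. (cmod (symbol r p a (2*pi*real j / real N)))^2)
     = (\<Sum>j<N. \<Sum>k\<in>K. \<Sum>l\<in>K. complex_of_real (a k * a l) * exp (\<i> * complex_of_real (real_of_int (k - l) * (2*pi*real j / real N))))"
    unfolding K_def of_real_sum sq_expand ..
  also have "\<dots> = (\<Sum>k\<in>K. \<Sum>l\<in>K. complex_of_real (a k * a l) * (\<Sum>j<N. exp (\<i> * complex_of_real (real_of_int (k - l) * (2*pi*real j / real N)))))"
    by (simp add: sum.swap[of _ "{..<N}"] sum_distrib_left)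
  also have "\<dots> = (\<Sum>k\<in>K. \<Sum>l\<in>K. complex_of_real (a k * a l) * (if k = l then of_nat N else 0))"
    by (intro sum.cong refl, subst inner) auto
  also have "\<dots> = (\<Sum>k\<in>K. complex_of_real (a k * a k) * of_nat N)"
    by (simp add: if_distrib sum.delta K_def cong: if_cong)
  also have "\<dots> = complex_of_real (real N * (\<Sum>k\<in>K. (a k)^2))"
    by (simp add: sum_distrib_left power2_eq_square mult.commute)
  finally have eq: "(\<Sum>j<N. (cmod (symbol r p a (2*pi*real j / real N)))^2) = real N * (\<Sum>k\<in>K. (a k)^2)"
    using of_real_eq_iff by blast
  have "(\<Sum>j<N. (cmod (symbol r p a (2*pi*real j / real N)))^2) \<le> (\<Sum>j<N. 1)"
    by (intro sum_mono) (simp add: stab power_le_one)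
  then have "real N * (\<Sum>k\<in>K. (a k)^2) \<le> real N * 1" using eq by simp
  then show ?thesis using N0 unfolding K_def by simp
qed

theorem lemma3p7:
  fixes r p :: nat and a :: "int \<Rightarrow> real" and lam :: real
  assumes stab: "\<And>\<xi>::real. cmod (symbol r p a \<xi>) \<le> 1"
    and cons: "(\<Sum>k = - int r..int p. a k) = 1"
    and hlam: "(\<Sum>k = - int r..int p. real_of_int k * a k) = - lam"
    and pos: "lam > 0"
  shows "\<bar>a 0\<bar> < 1"
proof (rule ccontr)
  assume "\<not> \<bar>a 0\<bar> < 1"
  then have a0: "(a 0)^2 \<ge> 1"
    using one_le_power[of "\<bar>a 0\<bar>" 2] by simp
  define K where "K = {- int r..int p}"
  have fin: "finite K" and z: "0 \<in> K" unfolding K_def by auto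
  have "(\<Sum>k\<in>K. (a k)^2) = (a 0)^2 + (\<Sum>k\<in>K-{0}. (a k)^2)"
    using sum.remove[OF fin z] by simp
  then have s0: "(\<Sum>k\<in>K-{0}. (a k)^2) \<le> 0"
    using parseval_bound[OF stab] a0 unfolding K_def by simp
  have "\<forall>k\<in>K-{0}. (a k)^2 = 0"
    using sum_nonneg_eq_0_iff[of "K-{0}" "\<lambda>k. (a k)^2"] s0 fin
    by (metis (no_types, lifting) finite_Diff order_antisym sum_nonneg zero_le_power2)
  then have "(\<Sum>k\<in>K. real_of_int k * a k) = 0"
    by (intro sum.neutral) auto
  then show False using hlam pos unfolding K_def by simp
qed

end
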